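(* Let $d\ge 1$ and let $p = x_1^{\alpha_1}\cdots x_d^{\alpha_d} - x_1^{\beta_1}\cdots x_d^{\beta_d}\in \overline{\mathbb{Q}}[x_1,\dots,x_d]$, with $\bm{\alpha}=(\alpha_1,\dots,\alpha_d),\bm{\beta}=(\beta_1,\dots,\beta_d)\in\mathbb{N}^d$, be an irreducible polynomial, and let $I=\langle p\rangle$. Let $L=\mathbb{Z}(\bm{\alpha}-\bm{\beta})\subseteq\mathbb{Z}^d$ and let $A=(a_{ij})\in\mathbb{Z}^{s\times d}$ ($s\ge1$) be an integer matrix with $\{\bm{u}\in\mathbb{Z}^d : A\bm{u}=\bm{0}\} = \operatorname{Sat}(L)$. Let $\pi_1,\dots,\pi_s$ be the first $s$ prime numbers and $\lambda_j=\prod_{i=1}^s \pi_i^{a_{ij}}$ for $j=1,\dots,d$. Then the invariant ideal of the linear loop with initial vector $(1,\dots,1)$ and update matrix $\operatorname{diag}(\lambda_1,\dots,\lambda_d)$ is exactly $I$.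
   Context: Throughout, $\mathbb{K}=\overline{\mathbb{Q}}$. A linear loop with initial vector $\bm{s}$ and update matrix $M$ (a $d\times d$ matrix) produces the orbit $\bm{x}(n)=M^n\bm{s}$, $n\ge 0$. A polynomial $P\in\mathbb{K}[x_1,\dots,x_d]$ is an invariant of the loop if $P(\bm{x}(n))=0$ for all $n\ge0$; the invariant ideal of the loop is the ideal of all its invariants. For a sublattice $L\subseteq\mathbb{Z}^d$, $\operatorname{Sat}(L)=\{\bm{u}\in\mathbb{Z}^d : c\bm{u}\in L \text{ for some } c\in\mathbb{Z}\setminus\{0\}\}$. (Such a matrix $A$ always exists; this loop is the output of the paper's synthesis procedure on input $I$.) *)

theory Defs
  imports Complex_Main "HOL-Library.Poly_Mapping" "HOL-Library.Infinite_Set"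
    "HOL-Computational_Algebra.Primes" "HOL-Computational_Algebra.Polynomial"
begin

text \<open>Multivariate polynomials over Qbar, represented as finitely supported maps from
  monomials (exponent vectors nat \<Rightarrow>0 nat, variable x_(i+1) has index i) to complex
  coefficients; Qbar is the set of algebraic complex numbers.\<close>

type_synonym mpoly = "(nat \<Rightarrow>\<^sub>0 nat) \<Rightarrow>\<^sub>0 complex"

definition monom :: "(nat \<Rightarrow>\<^sub>0 nat) \<Rightarrow> mpoly" where
  "monom m = Poly_Mapping.single m 1"

definition qbar_poly :: "nat \<Rightarrow> mpoly set" where
  "qbar_poly d = {P. (\<forall>m. algebraic (Poly_Mapping.lookup P m)) \<and>
                     (\<forall>m \<in> Poly_Mapping.keys P. Poly_Mapping.keys m \<subseteq> {..<d})}"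

definition eval_mpoly :: "mpoly \<Rightarrow> (nat \<Rightarrow> complex) \<Rightarrow> complex" where
  "eval_mpoly P x = (\<Sum>m\<in>Poly_Mapping.keys P. Poly_Mapping.lookup P m * (\<Prod>i\<in>Poly_Mapping.keys m. x i ^ Poly_Mapping.lookup m i))"

definition unit_in :: "nat \<Rightarrow> mpoly \<Rightarrow> bool" where
  "unit_in d u \<longleftrightarrow> u \<in> qbar_poly d \<and> (\<exists>v \<in> qbar_poly d. u * v = 1)"

definition irreducible_in :: "nat \<Rightarrow> mpoly \<Rightarrow> bool" where
  "irreducible_in d p \<longleftrightarrow> p \<in> qbar_poly d \<and> p \<noteq> 0 \<and> \<not> unit_in d p \<and>
     (\<forall>a \<in> qbar_poly d. \<forall>b \<in> qbar_poly d. p = a * b \<longrightarrow> unit_in d a \<or> unit_in d b)"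

definition principal_ideal :: "nat \<Rightarrow> mpoly \<Rightarrow> mpoly set" where
  "principal_ideal d p = {q * p | q. q \<in> qbar_poly d}"

definition mat_vec :: "nat \<Rightarrow> (nat \<Rightarrow> nat \<Rightarrow> complex) \<Rightarrow> (nat \<Rightarrow> complex) \<Rightarrow> (nat \<Rightarrow> complex)" where
  "mat_vec d M v = (\<lambda>i. if i < d then (\<Sum>j<d. M i j * v j) else 0)"

definition loop_orbit :: "nat \<Rightarrow> (nat \<Rightarrow> nat \<Rightarrow> complex) \<Rightarrow> (nat \<Rightarrow> complex) \<Rightarrow> nat \<Rightarrow> (nat \<Rightarrow> complex)" where
  "loop_orbit d M s n = (mat_vec d M ^^ n) s"

definition invariant_ideal :: "nat \<Rightarrow> (nat \<Rightarrow> nat \<Rightarrow> complex) \<Rightarrow> (nat \<Rightarrow> complex) \<Rightarrow> mpoly set" where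
  "invariant_ideal d M s = {P \<in> qbar_poly d. \<forall>n. eval_mpoly P (loop_orbit d M s n) = 0}"

definition int_vecs :: "nat \<Rightarrow> (nat \<Rightarrow> int) set" where
  "int_vecs d = {u. \<forall>i\<ge>d. u i = 0}"

definition Sat :: "nat \<Rightarrow> (nat \<Rightarrow> int) set \<Rightarrow> (nat \<Rightarrow> int) set" where
  "Sat d L = {u \<in> int_vecs d. \<exists>c::int. c \<noteq> 0 \<and> (\<lambda>i. c * u i) \<in> L}"

text \<open>The k-th prime, 0-indexed: nth_prime 0 = 2.\<close>
definition nth_prime :: "nat \<Rightarrow> nat" where
  "nth_prime k = enumerate {p. prime p} k"

end

theory Submission
  imports Defs
begin

interpretation qvs: vector_space "\<lambda>(r::rat) (z::complex). of_rat r * z"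
  by unfold_locales (auto simp: algebra_simps of_rat_add of_rat_mult)

lemma alg_pow_span:
  assumes "algebraic (a::complex)"
  shows "\<exists>A. finite A \<and> (\<forall>i. a ^ i \<in> qvs.span A)"
proof -
  obtain p where pq: "\<forall>i. coeff p i \<in> \<rat>" and p0: "p \<noteq> 0" and pa: "poly p a = 0"
    using assms unfolding algebraic_altdef by blast
  define n where "n = degree p"
  define A where "A = (\<lambda>i. a ^ i) ` {..<n}"
  define r where "r i = (SOME x. coeff p i = of_rat x)" for i
  have r: "coeff p i = of_rat (r i)" for i
  proof -
    have "\<exists>x. coeff p i = of_rat x" using pq unfolding Rats_def by blast
    then show ?thesis unfolding r_def by (rule someI_ex)
  qed
  have lc: "r n \<noteq> 0" using p0 r[of n] leading_coeff_0_iff[of p] unfolding n_def by auto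
  define S where "S = (\<Sum>j<n. of_rat (r j) * a ^ j)"
  have "(\<Sum>i<Suc n. coeff p i * a ^ i) = 0" using pa 
    unfolding poly_altdef n_def lessThan_Suc_atMost by simp
  hence "S + of_rat (r n) * a ^ n = 0" unfolding sum.lessThan_Suc S_def r .
  hence eq: "of_rat (r n) * a ^ n = - S" by (simp add: add_eq_0_iff2 add.commute)
  have an: "a ^ n = - S / of_rat (r n)" proof -
    have c0: "(of_rat (r n)::complex) \<noteq> 0" using lc by simp
    show ?thesis using eq c0 by (simp add: field_simps)
  qed
  have "a ^ i \<in> qvs.span A" for i
  proof (induction i rule: less_induct)
    case (less i)
    show ?case
    proof (cases "i < n")
      case True
      then show ?thesis unfolding A_def by (intro qvs.span_base) auto
    next
      case False
      have "a ^ i = a ^ (i - n) * a ^ n" using False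
        by (metis le_add_diff_inverse2 not_less power_add)
      also have "\<dots> = (\<Sum>j<n. of_rat (- r j / r n) * a ^ (i - n + j))"
        unfolding an S_def
        by (simp add: sum_distrib_left sum_divide_distrib of_rat_divide of_rat_minus power_add sum_negf mult_ac)
      also have "\<dots> \<in> qvs.span A"
      proof (intro qvs.span_sum)
        fix j assume "j \<in> {..<n}"
        hence "i - n + j < i" using False by auto
        then show "of_rat (- r j / r n) * a ^ (i - n + j) \<in> qvs.span A"
          using less qvs.span_scale[of "a ^ (i - n + j)" A "- r j / r n"] by blast
      qed
      finally show ?thesis .
    qed
  qed
  then show ?thesis unfolding A_def by blast
qed
lemma span_mult:
  assumes "x \<in> qvs.span A" "y \<in> qvs.span B"
  shows "x * y \<in> qvs.span ((\<lambda>(u,v). u * v) ` (A \<times> B))"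
proof -
  have H: "u * y \<in> qvs.span ((\<lambda>(u,v). u * v) ` (A \<times> B))" if "u \<in> A" for u
    using assms(2)
  proof (induction y rule: qvs.span_induct_alt)
    case base then show ?case by (simp add: qvs.span_zero)
  next
    case (step c v y)
    have "u * v \<in> (\<lambda>(u,v). u * v) ` (A \<times> B)" using that step(1) by force
    hence "of_rat c * (u * v) \<in> qvs.span ((\<lambda>(u,v). u * v) ` (A \<times> B))"
      by (intro qvs.span_scale qvs.span_base)
    have e: "u * (of_rat c * v + y) = of_rat c * (u * v) + u * y" by (simp add: algebra_simps)
    show ?case unfolding e by (intro qvs.span_add) fact+
  qed
  from assms(1) show ?thesis
  proof (induction x rule: qvs.span_induct_alt)
    case base then show ?case by (simp add: qvs.span_zero)
  next
    case (step c u x)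
    have e: "(of_rat c * u + x) * y = of_rat c * (u * y) + x * y" by (simp add: algebra_simps)
    show ?case unfolding e by (intro qvs.span_add qvs.span_scale H step(1) step(2))
  qed
qed

lemma span_pow_algebraic:
  assumes "finite T" "\<And>k. (z::complex) ^ k \<in> qvs.span T"
  shows "algebraic z"
proof (cases "inj_on (\<lambda>k. z ^ k) {..card T}")
  case False
  then obtain i j where ij: "i < j" "z ^ i = z ^ j"
    unfolding inj_on_def by (metis linorder_neqE_nat)
  define p :: "complex poly" where "p = Polynomial.monom 1 j - Polynomial.monom 1 i"
  have "coeff p j = 1" using ij by (simp add: p_def coeff_monom)
  hence "p \<noteq> 0" by auto
  moreover have "poly p z = 0" using ij by (simp add: p_def poly_monom)
  moreover have "\<forall>k. coeff p k \<in> \<int>" by (simp add: p_def coeff_monom)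
  ultimately show ?thesis by (intro algebraicI[of p]) auto
next
  case True
  define S where "S = (\<lambda>k. z ^ k) ` {..card T}"
  have cS: "card S = Suc (card T)" using True by (simp add: S_def card_image)
  have "S \<subseteq> qvs.span T" using assms(2) by (auto simp: S_def)
  hence "\<not> qvs.independent S" using qvs.independent_span_bound[OF assms(1)] cS by fastforce
  then obtain t u where t: "finite t" "t \<subseteq> S" "(\<Sum>v\<in>t. of_rat (u v) * v) = 0" "\<exists>v\<in>t. u v \<noteq> 0"
    unfolding qvs.dependent_explicit by blast
  define c where "c k = (if z ^ k \<in> t then u (z ^ k) else 0)" for k
  define p :: "complex poly" where "p = (\<Sum>k\<le>card T. Polynomial.monom (of_rat (c k)) k)"
  have coeffp: "coeff p k = (if k \<le> card T then of_rat (c k) else 0)" for k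
    by (simp add: p_def coeff_sum coeff_monom)
  obtain v where v: "v \<in> t" "u v \<noteq> 0" using t by blast
  then obtain k where k: "k \<le> card T" "v = z ^ k" using t(2) S_def by auto
  have "coeff p k \<noteq> 0" using k v by (simp add: coeffp c_def)
  hence "p \<noteq> 0" by auto
  moreover have "\<forall>k. coeff p k \<in> \<rat>" by (simp add: coeffp)
  moreover have "poly p z = 0"
  proof -
    have "poly p z = (\<Sum>k\<le>card T. of_rat (c k) * z ^ k)"
      by (simp add: p_def poly_sum poly_monom)
    also have "\<dots> = (\<Sum>k\<in>{k. k \<le> card T \<and> z ^ k \<in> t}. of_rat (u (z ^ k)) * z ^ k)"
      by (rule sum.mono_neutral_cong_right) (auto simp: c_def)
    also have "\<dots> = (\<Sum>v\<in>t. of_rat (u v) * v)"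
    proof (rule sum.reindex_bij_betw)
      show "bij_betw (\<lambda>k. z ^ k) {k. k \<le> card T \<and> z ^ k \<in> t} t"
        unfolding bij_betw_def using True t(2)
        by (auto simp: S_def inj_on_def image_iff)
    qed
    finally show ?thesis using t(3) by simp
  qed
  ultimately show ?thesis by (intro algebraicI'[of p]) auto
qed

lemma algebraic_add_mult:
  assumes "algebraic (a::complex)" "algebraic b"
  shows "algebraic (a + b)" "algebraic (a * b)"
proof -
  obtain A where A: "finite A" "\<And>i. a ^ i \<in> qvs.span A" using alg_pow_span[OF assms(1)] by blast
  obtain B where B: "finite B" "\<And>i. b ^ i \<in> qvs.span B" using alg_pow_span[OF assms(2)] by blast
  let ?T = "(\<lambda>(u,v). u * v) ` (A \<times> B)"
  have fT: "finite ?T" using A B by auto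
  have ab: "a ^ i * b ^ j \<in> qvs.span ?T" for i j using span_mult A B by blast
  show "algebraic (a * b)"
    by (rule span_pow_algebraic[OF fT]) (simp add: power_mult_distrib ab)
  show "algebraic (a + b)"
  proof (rule span_pow_algebraic[OF fT])
    fix k
    have "(a + b) ^ k = (\<Sum>i\<le>k. of_rat (of_nat (k choose i)) * (a ^ i * b ^ (k - i)))"
      by (simp add: binomial_ring of_rat_of_nat_eq mult.assoc)
    also have "\<dots> \<in> qvs.span ?T"
      by (intro qvs.span_sum qvs.span_scale ab)
    finally show "(a + b) ^ k \<in> qvs.span ?T" .
  qed
qed

definition mon :: "(nat \<Rightarrow>\<^sub>0 nat) \<Rightarrow> (nat \<Rightarrow> complex) \<Rightarrow> complex" where
  "mon m x = (\<Prod>i\<in>Poly_Mapping.keys m. x i ^ Poly_Mapping.lookup m i)"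

lemma mon_superset:
  assumes "finite S" "Poly_Mapping.keys m \<subseteq> S"
  shows "mon m x = (\<Prod>i\<in>S. x i ^ Poly_Mapping.lookup m i)"
  unfolding mon_def using assms
  by (intro prod.mono_neutral_left) (auto simp: in_keys_iff)

lemma mon_add: "mon (m1 + m2) x = mon m1 x * mon m2 x"
proof -
  let ?S = "Poly_Mapping.keys m1 \<union> Poly_Mapping.keys m2"
  have "mon (m1 + m2) x = (\<Prod>i\<in>?S. x i ^ Poly_Mapping.lookup (m1 + m2) i)"
    using keys_add[of m1 m2] by (intro mon_superset) auto
  also have "\<dots> = (\<Prod>i\<in>?S. x i ^ Poly_Mapping.lookup m1 i) * (\<Prod>i\<in>?S. x i ^ Poly_Mapping.lookup m2 i)"
    by (simp add: lookup_add power_add prod.distrib)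
  also have "\<dots> = mon m1 x * mon m2 x"
    by (subst (1 2) mon_superset[of ?S]) auto
  finally show ?thesis .
qed

lemma mon_zero [simp]: "mon 0 x = 1"
  by (simp add: mon_def)

lemma eval_superset:
  assumes "finite S" "Poly_Mapping.keys P \<subseteq> S"
  shows "eval_mpoly P x = (\<Sum>m\<in>S. Poly_Mapping.lookup P m * mon m x)"
  unfolding eval_mpoly_def mon_def[symmetric] using assms
  by (intro sum.mono_neutral_left) (auto simp: in_keys_iff)

lemma eval_zero [simp]: "eval_mpoly 0 x = 0"
  by (simp add: eval_mpoly_def)

lemma eval_add: "eval_mpoly (P + Q) x = eval_mpoly P x + eval_mpoly Q x"
proof -
  let ?S = "Poly_Mapping.keys P \<union> Poly_Mapping.keys Q"
  have "eval_mpoly (P + Q) x = (\<Sum>m\<in>?S. Poly_Mapping.lookup (P + Q) m * mon m x)"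
    using keys_add[of P Q] by (intro eval_superset) auto
  also have "\<dots> = (\<Sum>m\<in>?S. Poly_Mapping.lookup P m * mon m x) + (\<Sum>m\<in>?S. Poly_Mapping.lookup Q m * mon m x)"
    by (simp add: lookup_add distrib_right sum.distrib)
  also have "\<dots> = eval_mpoly P x + eval_mpoly Q x"
    by (subst (1 2) eval_superset[of ?S]) auto
  finally show ?thesis .
qed

lemma eval_uminus: "eval_mpoly (- P) x = - eval_mpoly P x"
  unfolding eval_mpoly_def by (simp add: sum_negf)

lemma eval_diff: "eval_mpoly (P - Q) x = eval_mpoly P x - eval_mpoly Q x"
  using eval_add[of P "- Q" x] by (simp add: eval_uminus)

lemma eval_single: "eval_mpoly (Poly_Mapping.single m c) x = c * mon m x"
  by (subst eval_superset[of "{m}"]) auto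

lemma eval_sum: "eval_mpoly (sum f A) x = (\<Sum>a\<in>A. eval_mpoly (f a) x)"
  by (induction A rule: infinite_finite_induct) (auto simp: eval_add)

lemma pm_expand: "(P :: 'a \<Rightarrow>\<^sub>0 'b::comm_monoid_add) = (\<Sum>m\<in>Poly_Mapping.keys P. Poly_Mapping.single m (Poly_Mapping.lookup P m))"
proof (rule poly_mapping_eqI)
  fix k
  show "Poly_Mapping.lookup P k = Poly_Mapping.lookup (\<Sum>m\<in>Poly_Mapping.keys P. Poly_Mapping.single m (Poly_Mapping.lookup P m)) k"
    by (auto simp: lookup_sum lookup_single when_def in_keys_iff)
qed

lemma mult_expand:
  "(P :: mpoly) * Q = (\<Sum>m\<in>Poly_Mapping.keys P. \<Sum>m'\<in>Poly_Mapping.keys Q.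
      Poly_Mapping.single (m + m') (Poly_Mapping.lookup P m * Poly_Mapping.lookup Q m'))"
proof -
  have "P * Q = (\<Sum>m\<in>Poly_Mapping.keys P. Poly_Mapping.single m (Poly_Mapping.lookup P m)) *
       (\<Sum>m'\<in>Poly_Mapping.keys Q. Poly_Mapping.single m' (Poly_Mapping.lookup Q m'))"
    by (subst (1) pm_expand[of P], subst (1) pm_expand[of Q]) (rule refl)
  also have "\<dots> = (\<Sum>m\<in>Poly_Mapping.keys P. \<Sum>m'\<in>Poly_Mapping.keys Q.
      Poly_Mapping.single (m + m') (Poly_Mapping.lookup P m * Poly_Mapping.lookup Q m'))"
    by (simp add: sum_product mult_single)
  finally show ?thesis .
qed

lemma eval_mult: "eval_mpoly (P * Q) x = eval_mpoly P x * eval_mpoly Q x"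
proof -
  have "eval_mpoly (P * Q) x = (\<Sum>m\<in>Poly_Mapping.keys P. \<Sum>m'\<in>Poly_Mapping.keys Q.
      Poly_Mapping.lookup P m * Poly_Mapping.lookup Q m' * (mon m x * mon m' x))"
    by (subst mult_expand) (simp add: eval_sum eval_single mon_add)
  also have "\<dots> = (\<Sum>m\<in>Poly_Mapping.keys P. Poly_Mapping.lookup P m * mon m x) *
                  (\<Sum>m'\<in>Poly_Mapping.keys Q. Poly_Mapping.lookup Q m' * mon m' x)"
    by (simp add: sum_product mult_ac)
  also have "\<dots> = eval_mpoly P x * eval_mpoly Q x"
    by (simp add: eval_mpoly_def mon_def)
  finally show ?thesis .
qed

lemma eval_one [simp]: "eval_mpoly 1 x = 1"
  using eval_single[of 0 1 x] by simp

lemma eval_power: "eval_mpoly (P ^ n) x = eval_mpoly P x ^ n"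
  by (induction n) (auto simp: eval_mult)

lemma eval_monom: "eval_mpoly (monom m) x = mon m x"
  by (simp add: monom_def eval_single)

lemma monom_add: "monom (a + b) = monom a * monom b"
  by (simp add: monom_def mult_single)

lemma algebraic_sum: "(\<And>a. a \<in> A \<Longrightarrow> algebraic (f a :: complex)) \<Longrightarrow> algebraic (sum f A)"
  by (induction A rule: infinite_finite_induct) (auto intro: algebraic_add_mult)

lemma qbar_polyI:
  "(\<And>m. algebraic (Poly_Mapping.lookup P m)) \<Longrightarrow>
   (\<And>m i. m \<in> Poly_Mapping.keys P \<Longrightarrow> i \<in> Poly_Mapping.keys m \<Longrightarrow> i < d) \<Longrightarrow> P \<in> qbar_poly d"
  unfolding qbar_poly_def by blast

lemma qbar_polyD:
  "P \<in> qbar_poly d \<Longrightarrow> algebraic (Poly_Mapping.lookup P m)"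
  "P \<in> qbar_poly d \<Longrightarrow> m \<in> Poly_Mapping.keys P \<Longrightarrow> Poly_Mapping.keys m \<subseteq> {..<d}"
  unfolding qbar_poly_def by blast+

lemma qbar_add: "P \<in> qbar_poly d \<Longrightarrow> Q \<in> qbar_poly d \<Longrightarrow> P + Q \<in> qbar_poly d"
proof (rule qbar_polyI)
  fix m assume "P \<in> qbar_poly d" "Q \<in> qbar_poly d"
  then show "algebraic (Poly_Mapping.lookup (P + Q) m)"
    by (auto simp: lookup_add qbar_poly_def intro!: algebraic_add_mult)
next
  fix m i assume "P \<in> qbar_poly d" "Q \<in> qbar_poly d" "m \<in> Poly_Mapping.keys (P + Q)" "i \<in> Poly_Mapping.keys m"
  then show "i < d" using keys_add[of P Q] unfolding qbar_poly_def by blast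
qed

lemma qbar_uminus: "P \<in> qbar_poly d \<Longrightarrow> - P \<in> qbar_poly d"
  unfolding qbar_poly_def by auto

lemma qbar_diff: "P \<in> qbar_poly d \<Longrightarrow> Q \<in> qbar_poly d \<Longrightarrow> P - Q \<in> qbar_poly d"
  using qbar_add[of P d "- Q"] qbar_uminus[of Q d] by simp

lemma qbar_zero: "0 \<in> qbar_poly d"
  unfolding qbar_poly_def by auto

lemma qbar_single: "algebraic c \<Longrightarrow> Poly_Mapping.keys m \<subseteq> {..<d} \<Longrightarrow> Poly_Mapping.single m c \<in> qbar_poly d"
  unfolding qbar_poly_def by (auto simp: lookup_single when_def)

lemma qbar_monom: "Poly_Mapping.keys m \<subseteq> {..<d} \<Longrightarrow> monom m \<in> qbar_poly d"
  unfolding monom_def by (rule qbar_single) (auto intro: algebraic_int_imp_algebraic)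

lemma qbar_sum: "(\<And>a. a \<in> A \<Longrightarrow> f a \<in> qbar_poly d) \<Longrightarrow> sum f A \<in> qbar_poly d"
  by (induction A rule: infinite_finite_induct) (auto intro: qbar_add qbar_zero)

lemma qbar_mult: assumes "P \<in> qbar_poly d" "Q \<in> qbar_poly d" shows "P * Q \<in> qbar_poly d"
proof -
  have "(\<Sum>m\<in>Poly_Mapping.keys P. \<Sum>m'\<in>Poly_Mapping.keys Q.
      Poly_Mapping.single (m + m') (Poly_Mapping.lookup P m * Poly_Mapping.lookup Q m')) \<in> qbar_poly d"
  proof (intro qbar_sum qbar_single algebraic_add_mult(2))
    fix m m' assume "m \<in> Poly_Mapping.keys P" "m' \<in> Poly_Mapping.keys Q"
    then show "Poly_Mapping.keys (m + m') \<subseteq> {..<d}"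
      using keys_add[of m m'] qbar_polyD(2)[OF assms(1)] qbar_polyD(2)[OF assms(2)] by blast
  qed (use assms qbar_polyD(1) in auto)
  then show ?thesis by (subst mult_expand)
qed

lemma qbar_one: "1 \<in> qbar_poly d"
  using qbar_monom[of 0 d] by (simp add: monom_def)

lemma qbar_power: "P \<in> qbar_poly d \<Longrightarrow> P ^ n \<in> qbar_poly d"
  by (induction n) (auto intro: qbar_mult qbar_one)

lemma unit_eval: "unit_in d U \<Longrightarrow> eval_mpoly U x \<noteq> 0"
proof -
  assume "unit_in d U"
  then obtain V where "U * V = 1" unfolding unit_in_def by blast
  hence "eval_mpoly U x * eval_mpoly V x = 1" using eval_mult[of U V x] by simp
  then show ?thesis by auto
qed

lemma mon_ones [simp]: "mon m (\<lambda>_. 1) = 1"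
  by (simp add: mon_def)

lemma mon_point: "mon m (\<lambda>i. if i = j then z else 1) = z ^ Poly_Mapping.lookup m j"
proof -
  have "mon m (\<lambda>i. if i = j then z else 1) = (\<Prod>i\<in>Poly_Mapping.keys m. if i = j then z ^ Poly_Mapping.lookup m i else 1)"
    unfolding mon_def by (intro prod.cong) auto
  also have "\<dots> = z ^ Poly_Mapping.lookup m j"
    by (subst prod.delta) (auto simp: in_keys_iff)
  finally show ?thesis .
qed

lemma irr_neq:
  assumes "irreducible_in d (monom \<alpha> - monom \<beta>)"
  shows "\<alpha> \<noteq> \<beta>"
  using assms unfolding irreducible_in_def by auto

lemma irr_factor:
  assumes "irreducible_in d p" "a \<in> qbar_poly d" "b \<in> qbar_poly d" "p = a * b"
    "eval_mpoly a x = 0" "eval_mpoly b y = 0"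
  shows False
  using assms unit_eval unfolding irreducible_in_def by blast

lemma keys_sub_nat: "Poly_Mapping.keys ((a::nat \<Rightarrow>\<^sub>0 nat) - b) \<subseteq> Poly_Mapping.keys a"
  by (auto simp: in_keys_iff lookup_minus)

lemma irr_disj:
  assumes irr: "irreducible_in d (monom \<alpha> - monom \<beta>)"
    and ka: "Poly_Mapping.keys \<alpha> \<subseteq> {..<d}" and kb: "Poly_Mapping.keys \<beta> \<subseteq> {..<d}"
  shows "Poly_Mapping.lookup \<alpha> j = 0 \<or> Poly_Mapping.lookup \<beta> j = 0"
proof (rule ccontr)
  assume "\<not> ?thesis"
  hence a0: "Poly_Mapping.lookup \<alpha> j > 0" and b0: "Poly_Mapping.lookup \<beta> j > 0" by auto
  define e :: "nat \<Rightarrow>\<^sub>0 nat" where "e = Poly_Mapping.single j 1"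
  have "j \<in> Poly_Mapping.keys \<alpha>" using a0 by (simp add: in_keys_iff)
  hence jd: "j < d" using ka by auto
  have ea: "\<alpha> = e + (\<alpha> - e)"
    by (rule poly_mapping_eqI) (use a0 in \<open>auto simp: e_def lookup_add lookup_minus lookup_single when_def\<close>)
  have eb: "\<beta> = e + (\<beta> - e)"
    by (rule poly_mapping_eqI) (use b0 in \<open>auto simp: e_def lookup_add lookup_minus lookup_single when_def\<close>)
  have fac: "monom \<alpha> - monom \<beta> = monom e * (monom (\<alpha> - e) - monom (\<beta> - e))"
    by (subst ea, subst eb) (simp add: monom_add right_diff_distrib)
  have q1: "monom e \<in> qbar_poly d" using jd by (intro qbar_monom) (auto simp: e_def)
  have q2: "monom (\<alpha> - e) - monom (\<beta> - e) \<in> qbar_poly d"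
    using keys_sub_nat[of \<alpha> e] keys_sub_nat[of \<beta> e] ka kb by (intro qbar_diff qbar_monom) auto
  have z1: "eval_mpoly (monom e) (\<lambda>_. 0) = 0"
    by (simp add: eval_monom mon_def e_def)
  have z2: "eval_mpoly (monom (\<alpha> - e) - monom (\<beta> - e)) (\<lambda>_. 1) = 0"
    by (simp add: eval_diff eval_monom)
  show False using irr_factor[OF irr q1 q2 fac z1 z2] .
qed

lemma monom_power: "monom a ^ n = monom (\<Sum>i<n. a)"
proof (induction n)
  case 0 then show ?case by (simp add: monom_def)
next
  case (Suc n)
  have "monom a ^ Suc n = monom a * monom (\<Sum>i<n. a)" using Suc by simp
  also have "\<dots> = monom (a + (\<Sum>i<n. a))" by (simp only: monom_add)
  also have "a + (\<Sum>i<n. a) = (\<Sum>i<Suc n. a)" by (simp only: sum.lessThan_Suc add.commute)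
  finally show ?case .
qed

lemma root_unity_ne1:
  assumes "(Q::nat) \<ge> 2"
  shows "cis (2 * pi / Q) \<noteq> 1"
proof
  assume "cis (2 * pi / Q) = 1"
  hence "cos (2 * pi / Q) = 1" by (metis cis.sel(1) one_complex.sel(1))
  then obtain n :: int where n: "2 * pi / Q = of_int n * 2 * pi" unfolding cos_one_2pi_int by blast
  have "of_int n * (2 * pi) = (1 / real Q) * (2 * pi)" using n by simp
  hence "real_of_int n = 1 / real Q" using pi_gt_zero by (metis mult_right_cancel pi_neq_zero mult_eq_0_iff zero_neq_numeral)
  moreover have "0 < 1 / real Q" "1 / real Q < 1" using assms by auto
  ultimately have "0 < real_of_int n" "real_of_int n < 1" by auto
  hence "0 < n" "n < 1" by simp_all
  then show False by simp
qed

lemma irr_noprime: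
  assumes irr: "irreducible_in d (monom \<alpha> - monom \<beta>)"
    and ka: "Poly_Mapping.keys \<alpha> \<subseteq> {..<d}" and kb: "Poly_Mapping.keys \<beta> \<subseteq> {..<d}"
    and q: "prime (q::int)"
    and dv: "\<forall>j. q dvd (int (Poly_Mapping.lookup \<alpha> j) - int (Poly_Mapping.lookup \<beta> j))"
  shows False
proof -
  define Q where "Q = nat q"
  have q2: "q \<ge> 2" using q by (rule prime_ge_2_int)
  have qQ: "q = int Q" using q2 unfolding Q_def by simp
  have Q2: "Q \<ge> 2" using q2 unfolding Q_def by simp
  have disj: "Poly_Mapping.lookup \<alpha> j = 0 \<or> Poly_Mapping.lookup \<beta> j = 0" for j
    using irr_disj[OF irr ka kb] .
  have dva: "Q dvd Poly_Mapping.lookup \<alpha> j" and dvb: "Q dvd Poly_Mapping.lookup \<beta> j" for j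
  proof -
    have h: "int Q dvd int (Poly_Mapping.lookup \<alpha> j) - int (Poly_Mapping.lookup \<beta> j)" using dv qQ by simp
    show "Q dvd Poly_Mapping.lookup \<alpha> j"
    proof (cases "Poly_Mapping.lookup \<beta> j = 0")
      case True then show ?thesis using h by simp
    next
      case False then show ?thesis using disj[of j] by simp
    qed
    show "Q dvd Poly_Mapping.lookup \<beta> j"
    proof (cases "Poly_Mapping.lookup \<alpha> j = 0")
      case True then show ?thesis using h by simp
    next
      case False then show ?thesis using disj[of j] by simp
    qed
  qed
  define \<alpha>' :: "nat \<Rightarrow>\<^sub>0 nat" where "\<alpha>' = Poly_Mapping.map (\<lambda>x. x div Q) \<alpha>"
  define \<beta>' :: "nat \<Rightarrow>\<^sub>0 nat" where "\<beta>' = Poly_Mapping.map (\<lambda>x. x div Q) \<beta>"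
  have la: "Poly_Mapping.lookup \<alpha>' j = Poly_Mapping.lookup \<alpha> j div Q" for j
    by (simp add: \<alpha>'_def map.rep_eq when_def)
  have lb: "Poly_Mapping.lookup \<beta>' j = Poly_Mapping.lookup \<beta> j div Q" for j
    by (simp add: \<beta>'_def map.rep_eq when_def)
  have "Poly_Mapping.keys \<alpha>' \<subseteq> Poly_Mapping.keys \<alpha>"
  proof
    fix i assume "i \<in> Poly_Mapping.keys \<alpha>'"
    hence "Poly_Mapping.lookup \<alpha> i div Q \<noteq> 0" by (simp add: in_keys_iff la)
    hence "Poly_Mapping.lookup \<alpha> i \<noteq> 0" by (metis div_0)
    then show "i \<in> Poly_Mapping.keys \<alpha>" by (simp add: in_keys_iff)
  qed
  hence ka': "Poly_Mapping.keys \<alpha>' \<subseteq> {..<d}" using ka by blast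
  have "Poly_Mapping.keys \<beta>' \<subseteq> Poly_Mapping.keys \<beta>"
  proof
    fix i assume "i \<in> Poly_Mapping.keys \<beta>'"
    hence "Poly_Mapping.lookup \<beta> i div Q \<noteq> 0" by (simp add: in_keys_iff lb)
    hence "Poly_Mapping.lookup \<beta> i \<noteq> 0" by (metis div_0)
    then show "i \<in> Poly_Mapping.keys \<beta>" by (simp add: in_keys_iff)
  qed
  hence kb': "Poly_Mapping.keys \<beta>' \<subseteq> {..<d}" using kb by blast
  have sa: "\<alpha> = (\<Sum>i<Q. \<alpha>')"
  proof (rule poly_mapping_eqI)
    fix k
    have "Poly_Mapping.lookup (\<Sum>i<Q. \<alpha>') k = Q * (Poly_Mapping.lookup \<alpha> k div Q)"
      unfolding lookup_sum by (simp only: sum_constant card_lessThan la of_nat_id)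
    also have "\<dots> = Poly_Mapping.lookup \<alpha> k" using dva[of k] by (rule dvd_mult_div_cancel)
    finally show "Poly_Mapping.lookup \<alpha> k = Poly_Mapping.lookup (\<Sum>i<Q. \<alpha>') k" by (rule sym)
  qed
  have sb: "\<beta> = (\<Sum>i<Q. \<beta>')"
  proof (rule poly_mapping_eqI)
    fix k
    have "Poly_Mapping.lookup (\<Sum>i<Q. \<beta>') k = Q * (Poly_Mapping.lookup \<beta> k div Q)"
      unfolding lookup_sum by (simp only: sum_constant card_lessThan lb of_nat_id)
    also have "\<dots> = Poly_Mapping.lookup \<beta> k" using dvb[of k] by (rule dvd_mult_div_cancel)
    finally show "Poly_Mapping.lookup \<beta> k = Poly_Mapping.lookup (\<Sum>i<Q. \<beta>') k" by (rule sym)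
  qed
  define F where "F = monom \<alpha>'"
  define G where "G = monom \<beta>'"
  define H where "H = (\<Sum>k<Q. F ^ k * G ^ (Q - 1 - k))"
  have pe: "monom \<alpha> - monom \<beta> = F ^ Q - G ^ Q"
    unfolding F_def G_def monom_power sa[symmetric] sb[symmetric] ..
  have fac: "monom \<alpha> - monom \<beta> = (F - G) * H"
  proof -
    obtain n where "Q = Suc n" using Q2 by (cases Q) auto
    then show ?thesis unfolding pe H_def using diff_power_eq_sum[of F n G] by simp
  qed
  have qF: "F \<in> qbar_poly d" "G \<in> qbar_poly d" unfolding F_def G_def using ka' kb' by (auto intro: qbar_monom)
  have q1: "F - G \<in> qbar_poly d" using qF by (rule qbar_diff)
  have q2: "H \<in> qbar_poly d" unfolding H_def using qF by (intro qbar_sum qbar_mult qbar_power) auto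
  have z1: "eval_mpoly (F - G) (\<lambda>_. 1) = 0"
    by (simp add: eval_diff eval_monom F_def G_def)
  have "\<alpha>' \<noteq> \<beta>'"
  proof
    assume eq: "\<alpha>' = \<beta>'"
    have "\<alpha> = \<beta>" by (subst sa, subst sb, simp only: eq)
    then show False using irr_neq[OF irr] by blast
  qed
  then obtain j where j: "Poly_Mapping.lookup \<alpha>' j \<noteq> Poly_Mapping.lookup \<beta>' j"
    by (meson poly_mapping_eqI)
  have dj: "Poly_Mapping.lookup \<alpha>' j = 0 \<or> Poly_Mapping.lookup \<beta>' j = 0" using disj[of j] by (auto simp: la lb)
  define a where "a = Poly_Mapping.lookup \<alpha>' j + Poly_Mapping.lookup \<beta>' j"
  have a0: "a > 0" using j dj a_def by auto
  define \<rho> where "\<rho> = cis (2 * pi / (real Q * real a))"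
  define x where "x = (\<lambda>i. if i = j then \<rho> else 1)"
  have "real a * (2 * pi / (real Q * real a)) = 2 * pi / real Q" using a0 by (simp add: field_simps)
  hence ra: "\<rho> ^ a = cis (2 * pi / Q)" unfolding \<rho>_def DeMoivre by simp
  have "real Q * (2 * pi / real Q) = 2 * pi" using Q2 by (simp add: field_simps)
  hence raQ: "(\<rho> ^ a) ^ Q = 1" unfolding ra DeMoivre by simp
  have ne: "cis (2 * pi / Q) \<noteq> 1" using root_unity_ne1[OF Q2] .
  have eF: "eval_mpoly F x = \<rho> ^ Poly_Mapping.lookup \<alpha>' j" unfolding F_def x_def eval_monom mon_point ..
  have eG: "eval_mpoly G x = \<rho> ^ Poly_Mapping.lookup \<beta>' j" unfolding G_def x_def eval_monom mon_point ..
  have nz: "eval_mpoly (F - G) x \<noteq> 0"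
    using dj ne ra unfolding eval_diff eF eG a_def by auto
  have zz: "eval_mpoly (F ^ Q - G ^ Q) x = 0"
    using dj raQ unfolding eval_diff eval_power eF eG a_def by auto
  have "eval_mpoly (F - G) x * eval_mpoly H x = 0" using zz unfolding pe[symmetric] fac eval_mult .
  hence z2: "eval_mpoly H x = 0" using nz by simp
  show False using irr_factor[OF irr q1 q2 fac z1 z2] .
qed

lemma prim_aux:
  fixes w :: "nat \<Rightarrow> int"
  assumes np: "\<And>q. prime q \<Longrightarrow> \<not> (\<forall>j. q dvd w j)"
  shows "c \<noteq> 0 \<Longrightarrow> (\<forall>j. c * u j = c' * w j) \<Longrightarrow> \<exists>t. \<forall>j. u j = t * w j"
proof (induction "nat \<bar>c\<bar>" arbitrary: c c' rule: less_induct)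
  case less
  show ?case
  proof (cases "\<bar>c\<bar> = 1")
    case True
    hence cc: "c * c = 1" by (metis abs_mult_self mult_1_right)
    have "u j = (c * c') * w j" for j
    proof -
      have "u j = c * (c * u j)" using cc by (simp add: mult.assoc[symmetric])
      also have "\<dots> = (c * c') * w j" using less.prems(2) by (simp add: mult.assoc)
      finally show ?thesis .
    qed
    then show ?thesis by blast
  next
    case False
    then obtain q where q: "prime q" "q dvd c" using prime_factor_int by blast
    show ?thesis
    proof (cases "q dvd c'")
      case True
      obtain c1 where c1: "c = q * c1" using q(2) by (auto elim: dvdE)
      obtain c2 where c2: "c' = q * c2" using True by (auto elim: dvdE)
      have q0: "q \<noteq> 0" using q(1) by auto
      have q2: "\<bar>q\<bar> \<ge> 2" using prime_ge_2_int[OF q(1)] by simp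
      have c10: "c1 \<noteq> 0" using less.prems(1) c1 by auto
      have "\<bar>c\<bar> = \<bar>q\<bar> * \<bar>c1\<bar>" using c1 by (simp add: abs_mult)
      moreover have "2 * \<bar>c1\<bar> \<le> \<bar>q\<bar> * \<bar>c1\<bar>" by (rule mult_right_mono[OF q2]) simp
      moreover have "\<bar>c1\<bar> > 0" using c10 by simp
      ultimately have "\<bar>c1\<bar> < \<bar>c\<bar>" by linarith
      hence lt: "nat \<bar>c1\<bar> < nat \<bar>c\<bar>" by simp
      have "\<forall>j. c1 * u j = c2 * w j"
      proof
        fix j
        have "c * u j = c' * w j" using less.prems(2) by blast
        hence "q * (c1 * u j) = q * (c2 * w j)" unfolding c1 c2 by (simp only: mult.assoc)
        then show "c1 * u j = c2 * w j" using q0 by simp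
      qed
      then show ?thesis using less.hyps[OF lt c10] by blast
    next
      case False
      have "q dvd w j" for j
      proof -
        have "q dvd c * u j" using q(2) by simp
        hence "q dvd c' * w j" using less.prems(2) by metis
        then show ?thesis using False q(1) prime_dvd_mult_iff by blast
      qed
      then show ?thesis using np[OF q(1)] by blast
    qed
  qed
qed

definition nthp :: "nat \<Rightarrow> complex" where "nthp k = of_nat (nth_prime k)"

definition RR :: "nat \<Rightarrow> (nat \<Rightarrow> int) \<Rightarrow> complex" where
  "RR s e = (\<Prod>k<s. nthp k powi e k)"

lemma nth_prime_prime: "prime (nth_prime k)"
  unfolding nth_prime_def using enumerate_in_set[OF primes_infinite] by blast

lemma nth_prime_inj: "inj nth_prime"
  unfolding nth_prime_def inj_on_def
  by (metis enumerate_mono linorder_neqE_nat primes_infinite less_irrefl)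

lemma nthp_nz: "nthp k \<noteq> 0"
  unfolding nthp_def using nth_prime_prime[of k] by (auto simp: prime_gt_0_nat)

lemma powi_split: "(x::complex) \<noteq> 0 \<Longrightarrow> x powi e = x ^ nat e / x ^ nat (- e)"
  by (auto simp: power_int_def power_inverse divide_inverse)

lemma mult_prime_prod:
  assumes "k0 < s"
  shows "multiplicity (nth_prime k0) (\<Prod>k<s. nth_prime k ^ h k) = h k0"
proof -
  let ?S = "nth_prime ` {..<s}"
  have inj: "inj_on nth_prime {..<s}" using nth_prime_inj by (auto simp: inj_on_def)
  define g where "g p = h (inv_into {..<s} nth_prime p)" for p
  have "(\<Prod>k<s. nth_prime k ^ h k) = (\<Prod>p\<in>?S. p ^ g p)"
    by (subst prod.reindex[OF inj]) (auto simp: g_def inv_into_f_f[OF inj])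
  also have "multiplicity (nth_prime k0) \<dots> = g (nth_prime k0)"
    using assms by (subst multiplicity_prod_prime_powers) (auto simp: nth_prime_prime)
  also have "\<dots> = h k0" using assms by (simp add: g_def inv_into_f_f[OF inj])
  finally show ?thesis .
qed

lemma RR_inj:
  assumes "RR s e = RR s e'" "k0 < s"
  shows "e k0 = e' k0"
proof -
  define P where "P f = (\<Prod>k<s. nth_prime k ^ f k)" for f
  have RP: "RR s e = of_nat (P (\<lambda>k. nat (e k))) / of_nat (P (\<lambda>k. nat (- e k)))" for e
    unfolding RR_def P_def using nthp_nz
    by (simp add: powi_split prod_dividef nthp_def of_nat_prod)
  have Pnz: "P f \<noteq> 0" for f unfolding P_def using nth_prime_prime by (auto simp: prime_gt_0_nat)
  have "(of_nat (P (\<lambda>k. nat (e k))) :: complex) * of_nat (P (\<lambda>k. nat (- e' k))) =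
        of_nat (P (\<lambda>k. nat (e' k))) * of_nat (P (\<lambda>k. nat (- e k)))"
    using assms(1) unfolding RP using Pnz by (simp add: field_simps)
  hence "P (\<lambda>k. nat (e k)) * P (\<lambda>k. nat (- e' k)) = P (\<lambda>k. nat (e' k)) * P (\<lambda>k. nat (- e k))"
    by (metis of_nat_eq_iff of_nat_mult)
  hence "P (\<lambda>k. nat (e k) + nat (- e' k)) = P (\<lambda>k. nat (e' k) + nat (- e k))"
    unfolding P_def by (simp add: power_add prod.distrib)
  hence "multiplicity (nth_prime k0) (P (\<lambda>k. nat (e k) + nat (- e' k))) =
         multiplicity (nth_prime k0) (P (\<lambda>k. nat (e' k) + nat (- e k)))" by simp
  hence "nat (e k0) + nat (- e' k0) = nat (e' k0) + nat (- e k0)"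
    unfolding P_def using mult_prime_prod[OF assms(2)] by simp
  then show ?thesis by arith
qed

lemma powi_prod_sum: "(x::complex) \<noteq> 0 \<Longrightarrow> (\<Prod>j\<in>J. x powi f j) = x powi (\<Sum>j\<in>J. f j)"
  by (induction J rule: infinite_finite_induct) (auto simp: power_int_add)

lemma mon_RR:
  assumes "Poly_Mapping.keys m \<subseteq> {..<d}"
  shows "mon m (\<lambda>j. \<Prod>k<s. nthp k powi A k j) = RR s (\<lambda>k. \<Sum>j<d. A k j * int (Poly_Mapping.lookup m j))"
proof -
  have "mon m (\<lambda>j. \<Prod>k<s. nthp k powi A k j) = (\<Prod>j<d. (\<Prod>k<s. nthp k powi A k j) ^ Poly_Mapping.lookup m j)"
    using assms by (intro mon_superset) auto
  also have "\<dots> = (\<Prod>j<d. \<Prod>k<s. nthp k powi (A k j * int (Poly_Mapping.lookup m j)))"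
    by (simp add: prod_power_distrib power_int_mult)
  also have "\<dots> = (\<Prod>k<s. \<Prod>j<d. nthp k powi (A k j * int (Poly_Mapping.lookup m j)))"
    by (rule prod.swap)
  also have "\<dots> = RR s (\<lambda>k. \<Sum>j<d. A k j * int (Poly_Mapping.lookup m j))"
    unfolding RR_def using nthp_nz by (simp add: powi_prod_sum)
  finally show ?thesis .
qed

lemma orbit_diag:
  "loop_orbit d (\<lambda>i j. if i = j then L j else 0) (\<lambda>i. if i < d then 1 else 0) n
     = (\<lambda>i. if i < d then L i ^ n else 0)"
proof (induction n)
  case 0 then show ?case by (intro ext) (simp add: loop_orbit_def)
next
  case (Suc n)
  have "loop_orbit d (\<lambda>i j. if i = j then L j else 0) (\<lambda>i. if i < d then 1 else 0) (Suc n)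
      = mat_vec d (\<lambda>i j. if i = j then L j else 0) (\<lambda>i. if i < d then L i ^ n else 0)"
    using Suc by (simp add: loop_orbit_def)
  also have "\<dots> = (\<lambda>i. if i < d then L i ^ Suc n else 0)"
  proof
    fix i
    show "mat_vec d (\<lambda>i j. if i = j then L j else 0) (\<lambda>i. if i < d then L i ^ n else 0) i
          = (if i < d then L i ^ Suc n else 0)"
    proof (cases "i < d")
      case True
      have "(\<Sum>j<d. (if i = j then L j else 0) * (if j < d then L j ^ n else 0))
          = (\<Sum>j<d. if i = j then L j * L j ^ n else 0)"
        by (intro sum.cong) auto
      also have "\<dots> = L i ^ Suc n" using True by (simp add: sum.delta)
      finally show ?thesis using True by (simp add: mat_vec_def)
    qed (simp add: mat_vec_def)
  qed
  finally show ?case .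
qed

lemma mon_orbit:
  assumes "Poly_Mapping.keys m \<subseteq> {..<d}"
  shows "mon m (\<lambda>i. if i < d then L i ^ n else 0) = mon m L ^ n"
proof -
  have "mon m (\<lambda>i. if i < d then L i ^ n else 0) = (\<Prod>i\<in>Poly_Mapping.keys m. (L i ^ Poly_Mapping.lookup m i) ^ n)"
    unfolding mon_def using assms by (intro prod.cong) (auto simp: power_mult[symmetric] mult.commute)
  also have "\<dots> = mon m L ^ n" by (simp add: mon_def prod_power_distrib)
  finally show ?thesis .
qed

lemma eval_orbit:
  assumes "P \<in> qbar_poly d"
  shows "eval_mpoly P (\<lambda>i. if i < d then L i ^ n else 0) =
         (\<Sum>m\<in>Poly_Mapping.keys P. Poly_Mapping.lookup P m * mon m L ^ n)"
  unfolding eval_mpoly_def mon_def[symmetric] using qbar_polyD(2)[OF assms]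
  by (intro sum.cong) (auto simp: mon_orbit)

lemma exp_indep:
  assumes "finite Z"
  shows "(\<forall>n. (\<Sum>z\<in>Z. a z * z ^ n) = (0::complex)) \<Longrightarrow> z \<in> Z \<Longrightarrow> a z = 0"
  using assms
proof (induction Z arbitrary: a z rule: finite_induct)
  case empty then show ?case by simp
next
  case (insert z0 F)
  have h: "a z0 * z0 ^ n + (\<Sum>z\<in>F. a z * z ^ n) = 0" for n
    using insert.prems(1) insert.hyps by (simp add: sum.insert)
  have "(\<Sum>z\<in>F. (a z * (z - z0)) * z ^ n) = 0" for n
  proof -
    have "(\<Sum>z\<in>F. (a z * (z - z0)) * z ^ n) = (\<Sum>z\<in>F. a z * z ^ Suc n) - z0 * (\<Sum>z\<in>F. a z * z ^ n)"
      by (simp add: sum_distrib_left sum_subtractf algebra_simps)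
    also have "\<dots> = 0" using h[of "Suc n"] h[of n]
      by (simp add: algebra_simps eq_neg_iff_add_eq_0[symmetric] add_eq_0_iff2)
    finally show ?thesis .
  qed
  hence F0: "\<forall>z\<in>F. a z * (z - z0) = 0" using insert.IH[of "\<lambda>z. a z * (z - z0)"] by blast
  hence F0': "\<forall>z\<in>F. a z = 0" using insert.hyps(2) by auto
  have "a z0 = 0" using h[of 0] F0' by simp
  then show ?case using insert.prems(2) F0' by auto
qed

lemma I_add: "a \<in> principal_ideal d p \<Longrightarrow> b \<in> principal_ideal d p \<Longrightarrow> a + b \<in> principal_ideal d p"
proof -
  assume "a \<in> principal_ideal d p" "b \<in> principal_ideal d p"
  then obtain q1 q2 where "q1 \<in> qbar_poly d" "q2 \<in> qbar_poly d" "a = q1 * p" "b = q2 * p"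
    unfolding principal_ideal_def by blast
  then show ?thesis unfolding principal_ideal_def
    by (intro CollectI exI[of _ "q1 + q2"]) (auto simp: distrib_right intro: qbar_add)
qed
  
lemma I_uminus: "a \<in> principal_ideal d p \<Longrightarrow> - a \<in> principal_ideal d p"
proof -
  assume "a \<in> principal_ideal d p"
  then obtain q1 where "q1 \<in> qbar_poly d" "a = q1 * p"
    unfolding principal_ideal_def by blast
  then show ?thesis unfolding principal_ideal_def
    by (intro CollectI exI[of _ "- q1"]) (auto intro: qbar_uminus)
qed

lemma I_zero: "0 \<in> principal_ideal d p"
  unfolding principal_ideal_def using qbar_zero by force

lemma I_mult: "a \<in> qbar_poly d \<Longrightarrow> b \<in> principal_ideal d p \<Longrightarrow> a * b \<in> principal_ideal d p"
proof -
  assume a: "a \<in> qbar_poly d" and "b \<in> principal_ideal d p"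
  then obtain q1 where "q1 \<in> qbar_poly d" "b = q1 * p"
    unfolding principal_ideal_def by blast
  then show ?thesis unfolding principal_ideal_def using a
    by (intro CollectI exI[of _ "a * q1"]) (auto simp: mult.assoc intro: qbar_mult)
qed

lemma I_sum: "(\<And>x. x \<in> A \<Longrightarrow> f x \<in> principal_ideal d p) \<Longrightarrow> sum f A \<in> principal_ideal d p"
  by (induction A rule: infinite_finite_induct) (auto intro: I_add I_zero)

lemma chain:
  fixes \<alpha> \<beta> :: "nat \<Rightarrow>\<^sub>0 nat"
  assumes disj: "\<And>j. Poly_Mapping.lookup \<alpha> j = 0 \<or> Poly_Mapping.lookup \<beta> j = 0"
    and ka: "Poly_Mapping.keys \<alpha> \<subseteq> {..<d}" and kb: "Poly_Mapping.keys \<beta> \<subseteq> {..<d}"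
  shows "Poly_Mapping.keys m \<subseteq> {..<d} \<Longrightarrow> Poly_Mapping.keys m' \<subseteq> {..<d} \<Longrightarrow>
    (\<forall>j. int (Poly_Mapping.lookup m j) - int (Poly_Mapping.lookup m' j) =
         int T * (int (Poly_Mapping.lookup \<alpha> j) - int (Poly_Mapping.lookup \<beta> j))) \<Longrightarrow>
    monom m - monom m' \<in> principal_ideal d (monom \<alpha> - monom \<beta>)"
proof (induction T arbitrary: m)
  case 0
  have "m = m'" by (rule poly_mapping_eqI) (use 0(3) in simp)
  then show ?case using I_zero by simp
next
  case (Suc T)
  note eqs = Suc.prems(3)
  have ge: "Poly_Mapping.lookup \<alpha> j \<le> Poly_Mapping.lookup m j" for j
  proof (cases "Poly_Mapping.lookup \<alpha> j = 0")
    case False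
    hence "Poly_Mapping.lookup \<beta> j = 0" using disj[of j] by simp
    hence "int (Poly_Mapping.lookup m j) = int (Poly_Mapping.lookup m' j) + int (Suc T) * int (Poly_Mapping.lookup \<alpha> j)"
      using eqs[rule_format, of j] by simp
    moreover have "int (Poly_Mapping.lookup \<alpha> j) \<le> int (Suc T) * int (Poly_Mapping.lookup \<alpha> j)"
      by (simp add: mult_le_cancel_right1)
    ultimately show ?thesis by linarith
  qed simp
  define \<gamma> where "\<gamma> = m - \<alpha>"
  have lg: "Poly_Mapping.lookup \<gamma> j = Poly_Mapping.lookup m j - Poly_Mapping.lookup \<alpha> j" for j
    by (simp add: \<gamma>_def lookup_minus)
  have mg: "m = \<gamma> + \<alpha>"
    by (rule poly_mapping_eqI) (simp add: lookup_add lg ge)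
  have kg: "Poly_Mapping.keys \<gamma> \<subseteq> {..<d}"
    using keys_sub_nat[of m \<alpha>] Suc.prems(1) unfolding \<gamma>_def by blast
  have km'': "Poly_Mapping.keys (\<gamma> + \<beta>) \<subseteq> {..<d}"
    using keys_add[of \<gamma> \<beta>] kg kb by blast
  have "\<forall>j. int (Poly_Mapping.lookup (\<gamma> + \<beta>) j) - int (Poly_Mapping.lookup m' j) =
         int T * (int (Poly_Mapping.lookup \<alpha> j) - int (Poly_Mapping.lookup \<beta> j))"
  proof
    fix j
    have "int (Poly_Mapping.lookup (\<gamma> + \<beta>) j) = int (Poly_Mapping.lookup m j) - int (Poly_Mapping.lookup \<alpha> j) + int (Poly_Mapping.lookup \<beta> j)"
      using ge[of j] by (simp add: lookup_add lg of_nat_diff)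
    then show "int (Poly_Mapping.lookup (\<gamma> + \<beta>) j) - int (Poly_Mapping.lookup m' j) =
         int T * (int (Poly_Mapping.lookup \<alpha> j) - int (Poly_Mapping.lookup \<beta> j))"
      using eqs[rule_format, of j] by (simp add: algebra_simps)
  qed
  hence IH: "monom (\<gamma> + \<beta>) - monom m' \<in> principal_ideal d (monom \<alpha> - monom \<beta>)"
    using Suc.IH[OF km'' Suc.prems(2)] by blast
  have "monom m - monom (\<gamma> + \<beta>) = monom \<gamma> * (monom \<alpha> - monom \<beta>)"
    by (subst mg) (simp add: monom_add right_diff_distrib)
  moreover have "monom \<gamma> \<in> qbar_poly d" using kg by (rule qbar_monom)
  ultimately have "monom m - monom (\<gamma> + \<beta>) \<in> principal_ideal d (monom \<alpha> - monom \<beta>)"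
    unfolding principal_ideal_def by blast
  from I_add[OF this IH] show ?case by simp
qed

lemma chain_int:
  fixes \<alpha> \<beta> :: "nat \<Rightarrow>\<^sub>0 nat"
  assumes disj: "\<And>j. Poly_Mapping.lookup \<alpha> j = 0 \<or> Poly_Mapping.lookup \<beta> j = 0"
    and ka: "Poly_Mapping.keys \<alpha> \<subseteq> {..<d}" and kb: "Poly_Mapping.keys \<beta> \<subseteq> {..<d}"
    and km: "Poly_Mapping.keys m \<subseteq> {..<d}" and km': "Poly_Mapping.keys m' \<subseteq> {..<d}"
    and eqs: "\<forall>j. int (Poly_Mapping.lookup m j) - int (Poly_Mapping.lookup m' j) =
         t * (int (Poly_Mapping.lookup \<alpha> j) - int (Poly_Mapping.lookup \<beta> j))"
  shows "monom m - monom m' \<in> principal_ideal d (monom \<alpha> - monom \<beta>)"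
proof (cases "t \<ge> 0")
  case True
  then have "t = int (nat t)" by simp
  then show ?thesis using chain[OF disj ka kb km km', of "nat t"] eqs by metis
next
  case False
  then have "- t = int (nat (- t))" by simp
  moreover have "\<forall>j. int (Poly_Mapping.lookup m' j) - int (Poly_Mapping.lookup m j) =
         (- t) * (int (Poly_Mapping.lookup \<alpha> j) - int (Poly_Mapping.lookup \<beta> j))"
    using eqs by (simp add: algebra_simps)
  ultimately have "monom m' - monom m \<in> principal_ideal d (monom \<alpha> - monom \<beta>)"
    using chain[OF disj ka kb km' km, of "nat (- t)"] by metis
  from I_uminus[OF this] show ?thesis by simp
qed

lemma single_monom: "Poly_Mapping.single 0 a * monom x = Poly_Mapping.single x (a :: complex)"
  by (simp add: monom_def mult_single)

lemma division:
  fixes \<mu> :: "(nat \<Rightarrow>\<^sub>0 nat) \<Rightarrow> complex"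
  assumes P: "P \<in> qbar_poly d"
   and cls: "\<And>m0. m0 \<in> Poly_Mapping.keys P \<Longrightarrow>
        (\<Sum>m\<in>{m\<in>Poly_Mapping.keys P. \<mu> m = \<mu> m0}. Poly_Mapping.lookup P m) = 0"
   and cg: "\<And>m m'. m \<in> Poly_Mapping.keys P \<Longrightarrow> m' \<in> Poly_Mapping.keys P \<Longrightarrow> \<mu> m = \<mu> m' \<Longrightarrow>
        monom m - monom m' \<in> principal_ideal d p"
  shows "P \<in> principal_ideal d p"
proof -
  define K where "K = Poly_Mapping.keys P"
  define c where "c = Poly_Mapping.lookup P"
  define r where "r m = (SOME x. x \<in> K \<and> \<mu> x = \<mu> m)" for m
  have rK: "r m \<in> K \<and> \<mu> (r m) = \<mu> m" if "m \<in> K" for m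
    unfolding r_def by (rule someI[of _ m]) (use that in simp)
  define Z where "Z = (\<Sum>m\<in>K. Poly_Mapping.single (r m) (c m))"
  have Z0: "Z = 0"
  proof (rule poly_mapping_eqI)
    fix y
    have "Poly_Mapping.lookup Z y = (\<Sum>m\<in>K. if r m = y then c m else 0)"
      unfolding Z_def lookup_sum lookup_single by (simp add: when_def)
    also have "\<dots> = (\<Sum>m\<in>{m\<in>K. r m = y}. c m)"
      by (simp add: sum.inter_filter K_def)
    also have "\<dots> = 0"
    proof (cases "\<exists>m0\<in>K. r m0 = y")
      case True
      then obtain m0 where m0: "m0 \<in> K" "r m0 = y" by blast
      have "{m\<in>K. r m = y} = {m\<in>K. \<mu> m = \<mu> m0}"
      proof (intro Collect_cong conj_cong refl iffI)
        fix m assume "m \<in> K" "r m = y"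
        then show "\<mu> m = \<mu> m0" using rK[of m] rK[of m0] m0 by metis
      next
        fix m assume mK: "m \<in> K" and e: "\<mu> m = \<mu> m0"
        have "(\<lambda>x. x \<in> K \<and> \<mu> x = \<mu> m) = (\<lambda>x. x \<in> K \<and> \<mu> x = \<mu> m0)" using e by simp
        then have "r m = r m0" unfolding r_def by simp
        then show "r m = y" using m0 by simp
      qed
      then show ?thesis using cls[of m0] m0 unfolding K_def c_def by simp
    next
      case False
      then have e: "{m\<in>K. r m = y} = {}" by auto
      show ?thesis unfolding e by (rule sum.empty)
    qed
    finally show "Poly_Mapping.lookup Z y = Poly_Mapping.lookup 0 y" by simp
  qed
  have "P - Z = (\<Sum>m\<in>K. Poly_Mapping.single m (c m)) - Z"
    unfolding K_def c_def by (subst pm_expand[of P]) (rule refl)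
  also have "\<dots> = (\<Sum>m\<in>K. Poly_Mapping.single 0 (c m) * (monom m - monom (r m)))"
    unfolding Z_def sum_subtractf[symmetric] by (simp add: right_diff_distrib single_monom)
  also have "\<dots> \<in> principal_ideal d p"
  proof (intro I_sum I_mult)
    fix m assume mK: "m \<in> K"
    show "Poly_Mapping.single 0 (c m) \<in> qbar_poly d"
      using qbar_polyD(1)[OF P] unfolding c_def by (intro qbar_single) auto
    show "monom m - monom (r m) \<in> principal_ideal d p"
      using cg[of m "r m"] rK[OF mK] mK unfolding K_def by simp
  qed
  finally show ?thesis using Z0 by simp
qed

theorem corollary1p3:
  fixes d s :: nat and \<alpha> \<beta> :: "nat \<Rightarrow>\<^sub>0 nat" and A :: "nat \<Rightarrow> nat \<Rightarrow> int"
  assumes "d \<ge> 1" and "s \<ge> 1"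
    and "Poly_Mapping.keys \<alpha> \<subseteq> {..<d}" and "Poly_Mapping.keys \<beta> \<subseteq> {..<d}"
    and "irreducible_in d (monom \<alpha> - monom \<beta>)"
    and "{u \<in> int_vecs d. \<forall>i<s. (\<Sum>j<d. A i j * u j) = 0}
         = Sat d {(\<lambda>j. c * (int (Poly_Mapping.lookup \<alpha> j) - int (Poly_Mapping.lookup \<beta> j))) | c::int. True}"
  shows "invariant_ideal d
           (\<lambda>i j. if i = j then (\<Prod>k<s. (of_nat (nth_prime k) :: complex) powi A k j) else 0)
           (\<lambda>i. if i < d then 1 else 0)
         = principal_ideal d (monom \<alpha> - monom \<beta>)"
proof -
  note ka = assms(3) and kb = assms(4) and irr = assms(5) and ker = assms(6)
  define p where "p = monom \<alpha> - monom \<beta>"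
  define w where "w j = int (Poly_Mapping.lookup \<alpha> j) - int (Poly_Mapping.lookup \<beta> j)" for j
  define \<Lambda> where "\<Lambda> j = (\<Prod>k<s. (of_nat (nth_prime k) :: complex) powi A k j)" for j
  have \<Lambda>': "\<Lambda> = (\<lambda>j. \<Prod>k<s. nthp k powi A k j)" unfolding \<Lambda>_def nthp_def by (rule ext) (rule refl)
  have orb: "loop_orbit d (\<lambda>i j. if i = j then (\<Prod>k<s. (of_nat (nth_prime k) :: complex) powi A k j) else 0)
           (\<lambda>i. if i < d then 1 else 0) n = (\<lambda>i. if i < d then \<Lambda> i ^ n else 0)" for n
    using orbit_diag[of d \<Lambda> n] unfolding \<Lambda>_def .
  have disj: "\<And>j. Poly_Mapping.lookup \<alpha> j = 0 \<or> Poly_Mapping.lookup \<beta> j = 0"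
    using irr_disj[OF irr ka kb] .
  have np: "\<And>q. prime q \<Longrightarrow> \<not> (\<forall>j. q dvd w j)"
    using irr_noprime[OF irr ka kb] unfolding w_def by blast
  have pq: "p \<in> qbar_poly d" unfolding p_def using ka kb by (intro qbar_diff qbar_monom)
  have wv: "w \<in> int_vecs d"
  proof -
    have "w i = 0" if "i \<ge> d" for i
    proof -
      have "i \<notin> Poly_Mapping.keys \<alpha>" "i \<notin> Poly_Mapping.keys \<beta>" using ka kb that by auto
      then show ?thesis unfolding w_def by (simp add: in_keys_iff)
    qed
    then show ?thesis unfolding int_vecs_def by blast
  qed
  have "w \<in> Sat d {(\<lambda>j. c * (int (Poly_Mapping.lookup \<alpha> j) - int (Poly_Mapping.lookup \<beta> j))) | c::int. True}"
    unfolding Sat_def using wv by (auto intro!: exI[of _ 1] simp: w_def)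
  hence kerw: "\<forall>k<s. (\<Sum>j<d. A k j * w j) = 0" using ker by blast
  have rel: "mon m \<Lambda> = mon m' \<Lambda> \<longleftrightarrow> (\<exists>t. \<forall>j. int (Poly_Mapping.lookup m j) - int (Poly_Mapping.lookup m' j) = t * w j)"
    if km: "Poly_Mapping.keys m \<subseteq> {..<d}" and km': "Poly_Mapping.keys m' \<subseteq> {..<d}" for m m'
  proof -
    define u where "u j = int (Poly_Mapping.lookup m j) - int (Poly_Mapping.lookup m' j)" for j
    have uv: "u \<in> int_vecs d"
    proof -
      have "u i = 0" if "i \<ge> d" for i
      proof -
        have "i \<notin> Poly_Mapping.keys m" "i \<notin> Poly_Mapping.keys m'" using km km' that by auto
        then show ?thesis unfolding u_def by (simp add: in_keys_iff)
      qed
      then show ?thesis unfolding int_vecs_def by blast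
    qed
    have dif: "(\<Sum>j<d. A k j * int (Poly_Mapping.lookup m j)) - (\<Sum>j<d. A k j * int (Poly_Mapping.lookup m' j))
          = (\<Sum>j<d. A k j * u j)" for k
      unfolding u_def sum_subtractf[symmetric] by (simp add: right_diff_distrib)
    have mm: "mon m \<Lambda> = RR s (\<lambda>k. \<Sum>j<d. A k j * int (Poly_Mapping.lookup m j))"
      unfolding \<Lambda>' using mon_RR[OF km] .
    have mm': "mon m' \<Lambda> = RR s (\<lambda>k. \<Sum>j<d. A k j * int (Poly_Mapping.lookup m' j))"
      unfolding \<Lambda>' using mon_RR[OF km'] .
    show ?thesis
    proof
      assume "mon m \<Lambda> = mon m' \<Lambda>"
      hence "\<forall>k<s. (\<Sum>j<d. A k j * int (Poly_Mapping.lookup m j)) = (\<Sum>j<d. A k j * int (Poly_Mapping.lookup m' j))"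
        unfolding mm mm' using RR_inj by blast
      hence "\<forall>k<s. (\<Sum>j<d. A k j * u j) = 0" using dif by (metis diff_self)
      hence "u \<in> Sat d {(\<lambda>j. c * (int (Poly_Mapping.lookup \<alpha> j) - int (Poly_Mapping.lookup \<beta> j))) | c::int. True}"
        using ker uv by blast
      then obtain c c' where c: "c \<noteq> 0" "(\<lambda>i. c * u i) = (\<lambda>j. c' * w j)"
        unfolding Sat_def w_def by blast
      hence "\<forall>j. c * u j = c' * w j" by metis
      then obtain t where "\<forall>j. u j = t * w j" using prim_aux[OF np c(1)] by blast
      then show "\<exists>t. \<forall>j. int (Poly_Mapping.lookup m j) - int (Poly_Mapping.lookup m' j) = t * w j"
        unfolding u_def by blast
    next
      assume "\<exists>t. \<forall>j. int (Poly_Mapping.lookup m j) - int (Poly_Mapping.lookup m' j) = t * w j"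
      then obtain t where t: "\<forall>j. u j = t * w j" unfolding u_def by blast
      have "(\<Sum>j<d. A k j * u j) = 0" if "k < s" for k
      proof -
        have "(\<Sum>j<d. A k j * u j) = t * (\<Sum>j<d. A k j * w j)"
          using t by (simp add: sum_distrib_left mult_ac)
        then show ?thesis using kerw that by simp
      qed
      hence "\<forall>k<s. (\<Sum>j<d. A k j * int (Poly_Mapping.lookup m j)) = (\<Sum>j<d. A k j * int (Poly_Mapping.lookup m' j))"
        using dif by (metis eq_iff_diff_eq_0)
      then show "mon m \<Lambda> = mon m' \<Lambda>" unfolding mm mm' RR_def by (intro prod.cong) auto
    qed
  qed
  show ?thesis
  proof (intro equalityI subsetI)
    fix P assume "P \<in> invariant_ideal d
           (\<lambda>i j. if i = j then (\<Prod>k<s. (of_nat (nth_prime k) :: complex) powi A k j) else 0)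
           (\<lambda>i. if i < d then 1 else 0)"
    hence P: "P \<in> qbar_poly d" and ev: "\<And>n. eval_mpoly P (\<lambda>i. if i < d then \<Lambda> i ^ n else 0) = 0"
      unfolding invariant_ideal_def orb by auto
    define K where "K = Poly_Mapping.keys P"
    define c where "c = Poly_Mapping.lookup P"
    define \<mu> where "\<mu> m = mon m \<Lambda>" for m
    have fK: "finite K" unfolding K_def by simp
    have grp: "(\<Sum>m\<in>K. c m * \<mu> m ^ n) = (\<Sum>z\<in>\<mu> ` K. (\<Sum>m\<in>{m\<in>K. \<mu> m = z}. c m) * z ^ n)" for n
    proof -
      have "(\<Sum>m\<in>K. c m * \<mu> m ^ n) = (\<Sum>z\<in>\<mu> ` K. \<Sum>m\<in>{m\<in>K. \<mu> m = z}. c m * \<mu> m ^ n)"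
        by (rule sum.image_gen[OF fK])
      also have "\<dots> = (\<Sum>z\<in>\<mu> ` K. (\<Sum>m\<in>{m\<in>K. \<mu> m = z}. c m) * z ^ n)"
        by (intro sum.cong refl) (auto simp: sum_distrib_right)
      finally show ?thesis .
    qed
    have "\<forall>n. (\<Sum>z\<in>\<mu> ` K. (\<Sum>m\<in>{m\<in>K. \<mu> m = z}. c m) * z ^ n) = 0"
      using ev eval_orbit[OF P] grp unfolding K_def c_def \<mu>_def by metis
    hence cls: "(\<Sum>m\<in>{m\<in>K. \<mu> m = \<mu> m0}. c m) = 0" if "m0 \<in> K" for m0
      using exp_indep[of "\<mu> ` K" "\<lambda>z. \<Sum>m\<in>{m\<in>K. \<mu> m = z}. c m" "\<mu> m0"] fK that by blast
    have cg: "monom m - monom m' \<in> principal_ideal d p"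
      if mK: "m \<in> K" "m' \<in> K" "\<mu> m = \<mu> m'" for m m'
    proof -
      have km: "Poly_Mapping.keys m \<subseteq> {..<d}" "Poly_Mapping.keys m' \<subseteq> {..<d}"
        using qbar_polyD(2)[OF P] mK unfolding K_def by auto
      then obtain t where "\<forall>j. int (Poly_Mapping.lookup m j) - int (Poly_Mapping.lookup m' j) = t * w j"
        using rel[OF km] mK(3) unfolding \<mu>_def by blast
      then show ?thesis unfolding p_def w_def using chain_int[OF disj ka kb km] by blast
    qed
    show "P \<in> principal_ideal d (monom \<alpha> - monom \<beta>)"
      using division[OF P, of \<mu> p] cls cg unfolding K_def c_def p_def by blast
  next
    fix Q assume "Q \<in> principal_ideal d (monom \<alpha> - monom \<beta>)"
    then obtain q where q: "q \<in> qbar_poly d" "Q = q * p" unfolding principal_ideal_def p_def by blast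
    have Qq: "Q \<in> qbar_poly d" using q pq by (simp add: qbar_mult)
    have "mon \<alpha> \<Lambda> = mon \<beta> \<Lambda>" using rel[OF ka kb] unfolding w_def by (auto intro!: exI[of _ 1])
    hence "eval_mpoly p (\<lambda>i. if i < d then \<Lambda> i ^ n else 0) = 0" for n
      unfolding p_def eval_diff eval_monom mon_orbit[OF ka] mon_orbit[OF kb] by simp
    hence "eval_mpoly Q (\<lambda>i. if i < d then \<Lambda> i ^ n else 0) = 0" for n
      unfolding q(2) eval_mult by simp
    then show "Q \<in> invariant_ideal d
           (\<lambda>i j. if i = j then (\<Prod>k<s. (of_nat (nth_prime k) :: complex) powi A k j) else 0)
           (\<lambda>i. if i < d then 1 else 0)"
      unfolding invariant_ideal_def orb using Qq by blast
  qed
qed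

end
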